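(* For every finite collection $\Gamma$ of pricing policies, the OJS problem admits a posted price mechanism whose regret with respect to $\Gamma$ on $T$-round instances is $O\!\left(\sqrt{CW\cdot T\log|\Gamma|}\right)$.
   Context: OJS problem: there are $N$ slots; slot $i\in[N]$ has bandwidth $c(i)$. $T$ jobs arrive in order $t=1,\dots,T$; job $t$ has arrival slot $a_t$, departure slot $d_t\ge a_t$, length $1\le l_t\le d_t-a_t+1$ and value $v_t\in[0,1)$, chosen by an adversary; jobs are reported at the beginning of their arrival slot in index order. $C\ge\max_ic(i)$ and $W\ge\max_t(d_t-a_t+1)$ are known and independent of $T$. Let $A_t=[a_t,a_t+W-1]$ and $\mathcal I_t=\{[i,i+l_t-1]:a_t\le i\le d_t-l_t+1\}$. For job $t$ the mechanism posts $\bm p_t\in(0,1]^{A_t}$ before learning $d_t,l_t,v_t$ (which are revealed afterwards); the job receives one bandwidth unit of each slot in $\hat A^{\bm p}_t=\emptyset$ if $v_t<\min_{I\in\mathcal I_t}\sum_{i\in I}\bm p(i)$ and otherwise $\hat A^{\bm p}_t=\arg\min_{I\in\mathcal I_t}\sum_{i\in I}\bm p(i)$ (lexicographic ties), paying $\hat q^{\bm p}_t=\sum_{i\in\hat A^{\bm p}_t}\bm p(i)$. Bandwidth vectors $\bm\lambda_t\in\{0,\dots,C\}^{A_t}$: $\bm\lambda_t(i)=c(i)$ if slot $i$ was not allocated to jobs $1,\dots,t-1$; $\bm\lambda_{t+1}(i)=\bm\lambda_t(i)-1$ if slot $i$ is allocated to job $t$ and $i\in A_{t+1}$. Posted prices must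 be feasible: $\bm p_t(i)=1$ whenever $\bm\lambda_t(i)=0$. A pricing policy $\gamma$ maps bandwidth vectors to feasible price vectors; playing it repeatedly from the start gives prices $\bm p^\gamma_t$ and revenue $\sum_t\hat q^{\bm p^\gamma_t}_t$. Regret w.r.t. $\Gamma$: $\max_{\gamma\in\Gamma}\sum_t\hat q^{\bm p^\gamma_t}_t-\mathbb{E}[\sum_t\hat q^{\bm p_t}_t]$. *)

theory Defs
  imports "HOL-Probability.Probability"
begin

text \<open>Slots are natural numbers; the real slots are 1..N. A job is
  (arrival slot, departure slot, length, value).\<close>

record job =
  arr :: nat
  dep :: nat
  len :: nat
  val :: real

text \<open>A price vector is given in absolute slot indexing (only slots of the
  window A_t = [a_t, a_t+W-1] matter).\<close>
type_synonym price = "nat \<Rightarrow> real"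

definition starts :: "job \<Rightarrow> nat set" where
  "starts j = {arr j .. dep j + 1 - len j}"

definition icost :: "price \<Rightarrow> job \<Rightarrow> nat \<Rightarrow> real" where
  "icost p j i = (\<Sum>k\<in>{i..<i + len j}. p k)"

definition mincost :: "price \<Rightarrow> job \<Rightarrow> real" where
  "mincost p j = Min (icost p j ` starts j)"

text \<open>Lexicographic tie breaking among intervals of equal length = smallest start.\<close>
definition chosen :: "price \<Rightarrow> job \<Rightarrow> nat" where
  "chosen p j = (LEAST i. i \<in> starts j \<and> icost p j i = mincost p j)"

definition alloc :: "price \<Rightarrow> job \<Rightarrow> nat set" where
  "alloc p j = (if val j < mincost p j then {} else {chosen p j ..< chosen p j + len j})"

definition pay :: "price \<Rightarrow> job \<Rightarrow> real" where
  "pay p j = (if val j < mincost p j then 0 else mincost p j)"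

definition used :: "(job \<times> price) list \<Rightarrow> nat \<Rightarrow> nat" where
  "used h i = length (filter (\<lambda>(j, p). i \<in> alloc p j) h)"

definition remain :: "(nat \<Rightarrow> nat) \<Rightarrow> (job \<times> price) list \<Rightarrow> nat \<Rightarrow> nat" where
  "remain c h i = c i - used h i"

text \<open>Bandwidth vector of the window A = [a, a+W-1], relative indexing 0..W-1
  (set to 0 outside the window so that it is a canonical element of {0..C}^W).\<close>
definition bwvec :: "(nat \<Rightarrow> nat) \<Rightarrow> nat \<Rightarrow> (job \<times> price) list \<Rightarrow> nat \<Rightarrow> nat \<Rightarrow> nat" where
  "bwvec c W h a k = (if k < W then remain c h (a + k) else 0)"

text \<open>Pricing policy: maps a (relative) bandwidth vector to a (relative) price vector.\<close>
type_synonym policy = "(nat \<Rightarrow> nat) \<Rightarrow> (nat \<Rightarrow> real)"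

definition feasible_policy :: "nat \<Rightarrow> nat \<Rightarrow> policy \<Rightarrow> bool" where
  "feasible_policy C W \<gamma> \<longleftrightarrow>
     (\<forall>bw. (\<forall>k. (k < W \<longrightarrow> bw k \<le> C) \<and> (W \<le> k \<longrightarrow> bw k = 0)) \<longrightarrow>
        (\<forall>k<W. 0 < \<gamma> bw k \<and> \<gamma> bw k \<le> 1 \<and> (bw k = 0 \<longrightarrow> \<gamma> bw k = 1)))"

definition to_abs :: "nat \<Rightarrow> (nat \<Rightarrow> real) \<Rightarrow> price" where
  "to_abs a q = (\<lambda>i. q (i - a))"

primrec policy_run :: "job list \<Rightarrow> policy \<Rightarrow> (nat \<Rightarrow> nat) \<Rightarrow> nat \<Rightarrow> (job \<times> price) list \<Rightarrow> real" where
  "policy_run [] \<gamma> c W h = 0"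
| "policy_run (j # js) \<gamma> c W h =
     (let p = to_abs (arr j) (\<gamma> (bwvec c W h (arr j)))
      in pay p j + policy_run js \<gamma> c W (h @ [(j, p)]))"

definition policy_revenue :: "policy \<Rightarrow> (nat \<Rightarrow> nat) \<Rightarrow> nat \<Rightarrow> job list \<Rightarrow> real" where
  "policy_revenue \<gamma> c W js = policy_run js \<gamma> c W []"

text \<open>A (randomized) posted price mechanism: given the history (past jobs, with their
  revealed d, l, v, together with the mechanism's own internal signal and posted price
  vector) and the arrival slot of the current job, it draws an internal signal and an
  (absolute) price vector.  Its decision is taken before d_t, l_t, v_t are revealed.\<close>
type_synonym mechanism = "(job \<times> nat \<times> price) list \<Rightarrow> nat \<Rightarrow> (nat \<times> price) pmf"

definition jp :: "(job \<times> nat \<times> price) list \<Rightarrow> (job \<times> price) list" where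
  "jp h = map (\<lambda>(j, s, p). (j, p)) h"

definition feasible_mech :: "(nat \<Rightarrow> nat) \<Rightarrow> nat \<Rightarrow> mechanism \<Rightarrow> bool" where
  "feasible_mech c W M \<longleftrightarrow>
     (\<forall>h a s p. (s, p) \<in> set_pmf (M h a) \<longrightarrow>
        (\<forall>i\<in>{a..<a + W}. 0 < p i \<and> p i \<le> 1 \<and> (remain c (jp h) i = 0 \<longrightarrow> p i = 1)))"

text \<open>Expected revenue of the mechanism on a fixed (oblivious) job sequence.\<close>
primrec mech_run :: "job list \<Rightarrow> mechanism \<Rightarrow> (job \<times> nat \<times> price) list \<Rightarrow> real" where
  "mech_run [] M h = 0"
| "mech_run (j # js) M h =
     measure_pmf.expectation (M h (arr j))
       (\<lambda>(s, p). pay p j + mech_run js M (h @ [(j, s, p)]))"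

definition mech_revenue :: "mechanism \<Rightarrow> job list \<Rightarrow> real" where
  "mech_revenue M js = mech_run js M []"

definition valid_job :: "nat \<Rightarrow> nat \<Rightarrow> job \<Rightarrow> bool" where
  "valid_job N W j \<longleftrightarrow> 1 \<le> arr j \<and> arr j \<le> dep j \<and> dep j \<le> N \<and>
     1 \<le> len j \<and> len j \<le> dep j + 1 - arr j \<and> dep j + 1 - arr j \<le> W \<and>
     0 \<le> val j \<and> val j < 1"

definition valid_jobs :: "nat \<Rightarrow> nat \<Rightarrow> job list \<Rightarrow> bool" where
  "valid_jobs N W js \<longleftrightarrow> (\<forall>j\<in>set js. valid_job N W j) \<and> sorted (map arr js)"

definition valid_bandwidth :: "nat \<Rightarrow> nat \<Rightarrow> (nat \<Rightarrow> nat) \<Rightarrow> bool" where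
  "valid_bandwidth N C c \<longleftrightarrow> (\<forall>i. c i \<le> C) \<and> (\<forall>i. (i < 1 \<or> N < i) \<longrightarrow> c i = 0)"

definition regret :: "policy set \<Rightarrow> (nat \<Rightarrow> nat) \<Rightarrow> nat \<Rightarrow> mechanism \<Rightarrow> job list \<Rightarrow> real" where
  "regret \<Gamma> c W M js = (MAX \<gamma>\<in>\<Gamma>. policy_revenue \<gamma> c W js) - mech_revenue M js"

end

theory Submission
  imports Defs
begin

lemma starts_ne:
  assumes "valid_job N W j"
  shows "finite (starts j)" "arr j \<in> starts j"
  using assms unfolding valid_job_def starts_def by auto

lemma chosen_props:
  assumes "valid_job N W j"
  shows "chosen p j \<in> starts j \<and> icost p j (chosen p j) = mincost p j"
proof -
  have fin: "finite (icost p j ` starts j)" and ne: "icost p j ` starts j \<noteq> {}"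
    using starts_ne[OF assms] by auto
  have "mincost p j \<in> icost p j ` starts j"
    unfolding mincost_def using Min_in[OF fin ne] .
  then obtain i where "i \<in> starts j" "icost p j i = mincost p j" by auto
  then have "\<exists>i. i \<in> starts j \<and> icost p j i = mincost p j" by blast
  then show ?thesis unfolding chosen_def by (rule LeastI_ex)
qed

lemma mincost_le:
  assumes "valid_job N W j" "i \<in> starts j"
  shows "mincost p j \<le> icost p j i"
  using starts_ne[OF assms(1)] assms(2) unfolding mincost_def by auto

lemma starts_window:
  assumes "valid_job N W j" "i \<in> starts j" "k \<in> {i..<i + len j}"
  shows "arr j \<le> k \<and> k < arr j + W \<and> k \<le> dep j"
  using assms unfolding valid_job_def starts_def by auto

lemma alloc_window:
  assumes "valid_job N W j" "x \<in> alloc p j"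
  shows "arr j \<le> x \<and> x < arr j + W \<and> chosen p j \<le> x \<and> x < chosen p j + len j"
  using assms chosen_props[OF assms(1), of p] starts_window[OF assms(1)]
  unfolding alloc_def by (auto split: if_splits)

lemma alloc_bound:
  assumes "valid_job N W j" "x \<in> alloc p j"
  shows "chosen p j + len j \<le> arr j + W" "arr j \<le> chosen p j"
  using assms chosen_props[OF assms(1), of p] unfolding alloc_def valid_job_def starts_def
  by (auto split: if_splits)

lemma icost_nonneg:
  assumes "valid_job N W j" "i \<in> starts j" "\<forall>x\<in>{arr j..<arr j + W}. 0 < p x"
  shows "0 \<le> icost p j i"
  unfolding icost_def
proof (rule sum_nonneg)
  fix k assume "k \<in> {i..<i + len j}"
  then show "0 \<le> p k" using starts_window[OF assms(1,2)] assms(3)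
    by (meson atLeastLessThan_iff less_imp_le)
qed

lemma mincost_nonneg:
  assumes "valid_job N W j" "\<forall>x\<in>{arr j..<arr j + W}. 0 < p x"
  shows "0 \<le> mincost p j"
  using chosen_props[OF assms(1), of p] icost_nonneg[OF assms(1) _ assms(2)] by metis

lemma pay_nonneg:
  assumes "valid_job N W j" "\<forall>x\<in>{arr j..<arr j + W}. 0 < p x"
  shows "0 \<le> pay p j"
  using mincost_nonneg[OF assms] unfolding pay_def by auto

lemma pay_le_sells:
  assumes "valid_job N W j"
  shows "pay p j \<le> (if alloc p j = {} then 0 else 1)"
  using assms unfolding pay_def alloc_def valid_job_def by auto

lemma ones_props:
  assumes "valid_job N W j"
  shows "pay (\<lambda>_. 1) j = 0" "alloc (\<lambda>_. 1) j = {}"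
proof -
  have "\<And>i. icost (\<lambda>_. 1) j i = real (len j)" unfolding icost_def by simp
  then have "mincost (\<lambda>_. 1) j = real (len j)"
  proof -
    have "starts j \<noteq> {}" using starts_ne[OF assms] by auto
    then show ?thesis unfolding mincost_def \<open>\<And>i. icost (\<lambda>_. 1) j i = real (len j)\<close>
      by (simp add: image_constant_conv)
  qed
  moreover have "val j < real (len j)" using assms unfolding valid_job_def by auto
  ultimately show "pay (\<lambda>_. 1) j = 0" "alloc (\<lambda>_. 1) j = {}"
    unfolding pay_def alloc_def by auto
qed

lemma alloc_price_lt1:
  assumes "valid_job N W j" "\<forall>x\<in>{arr j..<arr j + W}. 0 < p x" "x \<in> alloc p j"
  shows "p x < 1"
proof -
  have sell: "\<not> val j < mincost p j" and xin: "x \<in> {chosen p j..<chosen p j + len j}"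
    using assms(3) unfolding alloc_def by (auto split: if_splits)
  have ch: "chosen p j \<in> starts j" "icost p j (chosen p j) = mincost p j"
    using chosen_props[OF assms(1)] by auto
  have "p x \<le> icost p j (chosen p j)" unfolding icost_def
  proof (rule member_le_sum[OF xin])
    fix k assume "k \<in> {chosen p j..<chosen p j + len j} - {x}"
    then show "0 \<le> p k" using starts_window[OF assms(1) ch(1)] assms(2)
      by (meson DiffD1 atLeastLessThan_iff less_imp_le)
  qed simp
  then show ?thesis using ch sell assms(1) unfolding valid_job_def by auto
qed

lemma used_Nil[simp]: "used [] x = 0"
  unfolding used_def by simp

lemma used_snoc[simp]: "used (xs @ [(j, p)]) x = used xs x + (if x \<in> alloc p j then 1 else 0)"
  unfolding used_def by simp

lemma used_pos:
  assumes "0 < used xs x"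
  shows "\<exists>(j, p)\<in>set xs. x \<in> alloc p j"
proof -
  have "filter (\<lambda>(j, p). x \<in> alloc p j) xs \<noteq> []" using assms unfolding used_def by auto
  then show ?thesis by (auto simp: filter_empty_conv)
qed

section \<open>Policy histories\<close>

definition pprice :: "policy \<Rightarrow> (nat \<Rightarrow> nat) \<Rightarrow> nat \<Rightarrow> (job \<times> price) list \<Rightarrow> job \<Rightarrow> price" where
  "pprice \<gamma> c W h j = to_abs (arr j) (\<gamma> (bwvec c W h (arr j)))"

definition pstep :: "policy \<Rightarrow> (nat \<Rightarrow> nat) \<Rightarrow> nat \<Rightarrow> (job \<times> price) list \<Rightarrow> job \<Rightarrow> (job \<times> price) list" where
  "pstep \<gamma> c W = (\<lambda>h j. h @ [(j, pprice \<gamma> c W h j)])"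

definition phist :: "policy \<Rightarrow> (nat \<Rightarrow> nat) \<Rightarrow> nat \<Rightarrow> job list \<Rightarrow> (job \<times> price) list" where
  "phist \<gamma> c W js = foldl (pstep \<gamma> c W) [] js"

lemma phist_Nil[simp]: "phist \<gamma> c W [] = []"
  unfolding phist_def by simp

lemma phist_snoc[simp]:
  "phist \<gamma> c W (js @ [j]) = phist \<gamma> c W js @ [(j, pprice \<gamma> c W (phist \<gamma> c W js) j)]"
  unfolding phist_def by (simp add: pstep_def)

lemma phist_length[simp]: "length (phist \<gamma> c W js) = length js"
  by (induction js rule: rev_induct) auto

lemma foldl_pstep_prefix: "take (length h) (foldl (pstep \<gamma> c W) h ys) = h"
proof (induction ys arbitrary: h)
  case Nil then show ?case by simp
next
  case (Cons y ys)
  define h' where "h' = pstep \<gamma> c W h y"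
  have A: "take (length h') (foldl (pstep \<gamma> c W) h' ys) = h'" by (rule Cons.IH)
  have L: "length h' = Suc (length h)" unfolding h'_def pstep_def by simp
  have "take (length h) (foldl (pstep \<gamma> c W) h (y # ys))
      = take (length h) (take (length h') (foldl (pstep \<gamma> c W) h' ys))"
    by (simp add: take_take L h'_def[symmetric])
  also have "\<dots> = take (length h) h'" unfolding A ..
  also have "\<dots> = h" unfolding h'_def pstep_def by simp
  finally show ?case .
qed

lemma phist_take:
  assumes "t \<le> length js"
  shows "phist \<gamma> c W (take t js) = take t (phist \<gamma> c W js)"
proof -
  have "phist \<gamma> c W js = foldl (pstep \<gamma> c W) (phist \<gamma> c W (take t js)) (drop t js)"
    unfolding phist_def by (metis append_take_drop_id foldl_append)
  then have "take (length (phist \<gamma> c W (take t js))) (phist \<gamma> c W js) = phist \<gamma> c W (take t js)"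
    using foldl_pstep_prefix by metis
  moreover have "length (phist \<gamma> c W (take t js)) = t" using assms by simp
  ultimately show ?thesis by metis
qed

lemma phist_nth:
  assumes "t < length js"
  shows "phist \<gamma> c W js ! t = (js ! t, pprice \<gamma> c W (phist \<gamma> c W (take t js)) (js ! t))"
proof -
  have "take (Suc t) (phist \<gamma> c W js) = phist \<gamma> c W (take (Suc t) js)"
    using phist_take[of "Suc t" js] assms by simp
  also have "\<dots> = phist \<gamma> c W (take t js) @ [(js ! t, pprice \<gamma> c W (phist \<gamma> c W (take t js)) (js ! t))]"
    using assms by (simp add: take_Suc_conv_app_nth)
  finally have "take (Suc t) (phist \<gamma> c W js) ! t = (js ! t, pprice \<gamma> c W (phist \<gamma> c W (take t js)) (js ! t))"
    using assms by (simp add: nth_append min_def)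
  then show ?thesis by simp
qed

lemma phist_take_Suc:
  assumes "t < length js"
  shows "phist \<gamma> c W (take (Suc t) js) = phist \<gamma> c W (take t js) @ [(js ! t, pprice \<gamma> c W (phist \<gamma> c W (take t js)) (js ! t))]"
  using assms by (simp add: take_Suc_conv_app_nth)

lemma policy_run_eq:
  "policy_run js \<gamma> c W h + sum_list (map (\<lambda>(j, p). pay p j) h)
     = sum_list (map (\<lambda>(j, p). pay p j) (foldl (pstep \<gamma> c W) h js))"
proof (induction js arbitrary: h)
  case Nil then show ?case by simp
next
  case (Cons j js)
  show ?case
    using Cons.IH[of "h @ [(j, pprice \<gamma> c W h j)]"]
    by (simp add: pstep_def pprice_def Let_def algebra_simps)
qed

lemma policy_revenue_eq:
  "policy_revenue \<gamma> c W js = (\<Sum>u<length js. (\<lambda>(j, p). pay p j) (phist \<gamma> c W js ! u))"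
proof -
  have "policy_revenue \<gamma> c W js = sum_list (map (\<lambda>(j, p). pay p j) (phist \<gamma> c W js))"
    using policy_run_eq[of js \<gamma> c W "[]"] unfolding policy_revenue_def phist_def by simp
  also have "\<dots> = (\<Sum>u<length js. (\<lambda>(j, p). pay p j) (phist \<gamma> c W js ! u))"
    by (simp add: sum_list_sum_nth atLeast0LessThan)
  finally show ?thesis .
qed

lemma policy_price_props:
  assumes vb: "valid_bandwidth N C c" and fp: "feasible_policy C W \<gamma>" and x: "x \<in> {a..<a + W}"
  shows "0 < to_abs a (\<gamma> (bwvec c W H a)) x \<and> to_abs a (\<gamma> (bwvec c W H a)) x \<le> 1 \<and>
         (remain c H x = 0 \<longrightarrow> to_abs a (\<gamma> (bwvec c W H a)) x = 1)"
proof -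
  let ?bw = "bwvec c W H a"
  have dom: "\<forall>k. (k < W \<longrightarrow> ?bw k \<le> C) \<and> (W \<le> k \<longrightarrow> ?bw k = 0)"
  proof (intro allI conjI impI)
    fix k assume "k < W"
    have "remain c H (a + k) \<le> c (a + k)" unfolding remain_def by simp
    also have "\<dots> \<le> C" using vb unfolding valid_bandwidth_def by auto
    finally show "?bw k \<le> C" using \<open>k < W\<close> unfolding bwvec_def by simp
  qed (simp add: bwvec_def)
  have k: "x - a < W" and ax: "a + (x - a) = x" using x by auto
  have "?bw (x - a) = remain c H x" unfolding bwvec_def using k ax by simp
  then show ?thesis using fp dom k unfolding feasible_policy_def to_abs_def by metis
qed

lemma phist_cap:
  assumes vb: "valid_bandwidth N C c" and fp: "feasible_policy C W \<gamma>"
    and vj: "\<forall>j\<in>set js. valid_job N W j"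
  shows "used (phist \<gamma> c W js) x \<le> c x"
  using vj
proof (induction js rule: rev_induct)
  case Nil then show ?case by simp
next
  case (snoc j js)
  let ?H = "phist \<gamma> c W js"
  let ?p = "pprice \<gamma> c W ?H j"
  have vjj: "valid_job N W j" using snoc.prems by simp
  have IH: "used ?H x \<le> c x" using snoc by simp
  have pos: "\<forall>y\<in>{arr j..<arr j + W}. 0 < ?p y"
    using policy_price_props[OF vb fp] unfolding pprice_def by blast
  show ?case
  proof (cases "x \<in> alloc ?p j")
    case True
    have xw: "x \<in> {arr j..<arr j + W}" using alloc_window[OF vjj True] by auto
    have "?p x < 1" using alloc_price_lt1[OF vjj pos True] .
    then have "remain c ?H x \<noteq> 0"
      using policy_price_props[OF vb fp xw, of ?H] unfolding pprice_def by auto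
    then have "used ?H x < c x" unfolding remain_def by simp
    then show ?thesis using True by simp
  next
    case False then show ?thesis using IH by simp
  qed
qed

section \<open>A simple finite mixture distribution\<close>

definition mixl :: "nat \<Rightarrow> real \<Rightarrow> (nat \<Rightarrow> real) \<Rightarrow> nat \<Rightarrow> (nat \<times> real) list" where
  "mixl k b q n = (k, b) # map (\<lambda>i. (i, (1 - b) * q i)) [0..<n]"

lemma mixl_wf:
  assumes "0 \<le> b" "b \<le> 1" "\<And>i. 0 \<le> q i" "(\<Sum>i<n. q i) = 1"
  shows "pmf_of_list_wf (mixl k b q n)"
proof (rule pmf_of_list_wfI)
  fix x assume "x \<in> set (map snd (mixl k b q n))"
  then show "0 \<le> x" using assms unfolding mixl_def by auto
next
  have "sum_list (map snd (mixl k b q n)) = b + (\<Sum>i<n. (1 - b) * q i)"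
    unfolding mixl_def by (simp add: sum_list_distinct_conv_sum_set atLeast0LessThan o_def)
  also have "\<dots> = 1" using assms(4) by (simp add: sum_distrib_left[symmetric])
  finally show "sum_list (map snd (mixl k b q n)) = 1" .
qed

lemma sum_list_filter_upt:
  fixes w :: "nat \<Rightarrow> real"
  shows "sum_list (map snd (filter (\<lambda>z. fst z = a) (map (\<lambda>i. (i, w i)) [0..<n])))
     = (if a < n then w a else 0)"
proof -
  have "filter (\<lambda>z. fst z = a) (map (\<lambda>i. (i, w i)) [0..<n]) = map (\<lambda>i. (i, w i)) (filter (\<lambda>i. i = a) [0..<n])"
    by (simp add: filter_map o_def)
  moreover have "sum_list (map snd (map (\<lambda>i. (i, w i)) (filter (\<lambda>i. i = a) [0..<n])))
      = sum w (set (filter (\<lambda>i. i = a) [0..<n]))"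
    by (simp add: sum_list_distinct_conv_sum_set o_def)
  moreover have "set (filter (\<lambda>i. i = a) [0..<n]) = (if a < n then {a} else {})" by auto
  ultimately show ?thesis by simp
qed

lemma pmf_mixl:
  assumes "pmf_of_list_wf (mixl k b q n)"
  shows "pmf (pmf_of_list (mixl k b q n)) a = (if a = k then b else 0) + (if a < n then (1 - b) * q a else 0)"
  using assms by (simp add: pmf_pmf_of_list mixl_def sum_list_filter_upt)

lemma set_pmf_mixl:
  assumes "pmf_of_list_wf (mixl k b q n)"
  shows "set_pmf (pmf_of_list (mixl k b q n)) \<subseteq> insert k {..<n}"
  using set_pmf_of_list[OF assms] unfolding mixl_def by auto

lemma integral_mixl:
  fixes f :: "nat \<Rightarrow> real"
  assumes "pmf_of_list_wf (mixl k b q n)" "k < n"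
  shows "measure_pmf.expectation (pmf_of_list (mixl k b q n)) f = b * f k + (1 - b) * (\<Sum>i<n. q i * f i)"
proof -
  have kin: "insert k {..<n} = {..<n}" using assms(2) by auto
  have "measure_pmf.expectation (pmf_of_list (mixl k b q n)) f
      = (\<Sum>a\<in>{..<n}. f a * pmf (pmf_of_list (mixl k b q n)) a)"
    using set_pmf_mixl[OF assms(1)] kin by (intro integral_measure_pmf_real) auto
  also have "\<dots> = (\<Sum>a\<in>{..<n}. (if a = k then b * f k else 0) + (1 - b) * (q a * f a))"
    using pmf_mixl[OF assms(1)] by (intro sum.cong) (auto simp: algebra_simps)
  also have "\<dots> = b * f k + (1 - b) * (\<Sum>i<n. q i * f i)"
    using assms(2) by (simp add: sum.distrib sum_distrib_left)
  finally show ?thesis .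
qed

section \<open>The mechanism\<close>

definition gn :: "policy list \<Rightarrow> (nat \<Rightarrow> nat) \<Rightarrow> nat \<Rightarrow> job list \<Rightarrow> nat \<Rightarrow> nat \<Rightarrow> real" where
  "gn gs c W js u i = (\<lambda>(j, p). pay p j) (phist (gs ! i) c W js ! u)"

definition wt :: "policy list \<Rightarrow> (nat \<Rightarrow> nat) \<Rightarrow> nat \<Rightarrow> real \<Rightarrow> job list \<Rightarrow> nat \<Rightarrow> nat \<Rightarrow> real" where
  "wt gs c W eta js t i = exp (- eta * (\<Sum>u<t. 1 - gn gs c W js u i))"

definition qd :: "policy list \<Rightarrow> (nat \<Rightarrow> nat) \<Rightarrow> nat \<Rightarrow> real \<Rightarrow> job list \<Rightarrow> nat \<Rightarrow> nat \<Rightarrow> real" where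
  "qd gs c W eta js t i = wt gs c W eta js t i / (\<Sum>l<length gs. wt gs c W eta js t l)"

definition jobs :: "(job \<times> nat \<times> price) list \<Rightarrow> job list" where
  "jobs h = map fst h"

definition sync :: "policy list \<Rightarrow> (nat \<Rightarrow> nat) \<Rightarrow> nat \<Rightarrow> (job \<times> nat \<times> price) list \<Rightarrow> nat \<Rightarrow> nat \<Rightarrow> bool" where
  "sync gs c W h i a \<longleftrightarrow> (\<forall>x\<ge>a. used (jp h) x \<le> used (phist (gs ! i) c W (jobs h)) x)"

definition mprice :: "policy list \<Rightarrow> (nat \<Rightarrow> nat) \<Rightarrow> nat \<Rightarrow> (job \<times> nat \<times> price) list \<Rightarrow> nat \<Rightarrow> nat \<Rightarrow> price" where
  "mprice gs c W h a i = (if i < length gs \<and> sync gs c W h i a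
     then to_abs a ((gs ! i) (bwvec c W (phist (gs ! i) c W (jobs h)) a)) else (\<lambda>_. 1))"

definition cur :: "policy list \<Rightarrow> (job \<times> nat \<times> price) list \<Rightarrow> nat" where
  "cur gs h = (if h = [] then 0 else (if fst (snd (last h)) < length gs then fst (snd (last h)) else 0))"

definition keep :: "policy list \<Rightarrow> (nat \<Rightarrow> nat) \<Rightarrow> nat \<Rightarrow> real \<Rightarrow> (job \<times> nat \<times> price) list \<Rightarrow> real" where
  "keep gs c W eta h = (if h = [] then 0
     else min 1 (exp (- eta * (1 - gn gs c W (jobs h) (length h - 1) (cur gs h)))))"

definition kern :: "policy list \<Rightarrow> (nat \<Rightarrow> nat) \<Rightarrow> nat \<Rightarrow> real \<Rightarrow> (job \<times> nat \<times> price) list \<Rightarrow> nat pmf" where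
  "kern gs c W eta h = pmf_of_list (mixl (cur gs h) (keep gs c W eta h)
      (qd gs c W eta (jobs h) (length h)) (length gs))"

definition mech :: "policy list \<Rightarrow> (nat \<Rightarrow> nat) \<Rightarrow> nat \<Rightarrow> real \<Rightarrow> mechanism" where
  "mech gs c W eta h a = map_pmf (\<lambda>i. (i, mprice gs c W h a i)) (kern gs c W eta h)"

lemma wt_pos: "0 < wt gs c W eta js t i"
  unfolding wt_def by simp

lemma qd_nonneg: "0 \<le> qd gs c W eta js t i"
  unfolding qd_def using wt_pos by (simp add: less_imp_le sum_nonneg)

lemma qd_sum:
  assumes "gs \<noteq> []"
  shows "(\<Sum>i<length gs. qd gs c W eta js t i) = 1"
proof -
  have "0 < (\<Sum>l<length gs. wt gs c W eta js t l)"
    using assms wt_pos by (intro sum_pos) auto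
  then show ?thesis unfolding qd_def by (simp add: sum_divide_distrib[symmetric])
qed

lemma keep_range: "0 \<le> keep gs c W eta h" "keep gs c W eta h \<le> 1"
  unfolding keep_def by auto

lemma cur_lt: "gs \<noteq> [] \<Longrightarrow> cur gs h < length gs"
  unfolding cur_def by auto

lemma kern_wf:
  assumes "gs \<noteq> []"
  shows "pmf_of_list_wf (mixl (cur gs h) (keep gs c W eta h) (qd gs c W eta (jobs h) (length h)) (length gs))"
  using keep_range qd_nonneg qd_sum[OF assms] by (intro mixl_wf) auto

lemma jp_snoc[simp]: "jp (h @ [(j, s, p)]) = jp h @ [(j, p)]"
  unfolding jp_def by simp

lemma jobs_snoc[simp]: "jobs (h @ [(j, s, p)]) = jobs h @ [j]"
  unfolding jobs_def by simp

lemma mech_feasible: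
  assumes vb: "valid_bandwidth N C c" and fp: "\<forall>\<gamma>\<in>set gs. feasible_policy C W \<gamma>"
  shows "feasible_mech c W (mech gs c W eta)"
  unfolding feasible_mech_def
proof (intro allI impI ballI)
  fix h a s p x
  assume sp: "(s, p) \<in> set_pmf (mech gs c W eta h a)" and x: "x \<in> {a..<a + W}"
  then have p: "p = mprice gs c W h a s" unfolding mech_def by auto
  show "0 < p x \<and> p x \<le> 1 \<and> (remain c (jp h) x = 0 \<longrightarrow> p x = 1)"
  proof (cases "s < length gs \<and> sync gs c W h s a")
    case True
    let ?H = "phist (gs ! s) c W (jobs h)"
    have fps: "feasible_policy C W (gs ! s)" using True fp by auto
    have "used (jp h) x \<le> used ?H x" using True x unfolding sync_def by auto
    then have "remain c (jp h) x = 0 \<longrightarrow> remain c ?H x = 0" unfolding remain_def by auto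
    then show ?thesis using policy_price_props[OF vb fps x, of ?H] p True
      unfolding mprice_def by auto
  next
    case False
    then show ?thesis using p unfolding mprice_def by auto
  qed
qed

lemma mech_run_step:
  assumes "gs \<noteq> []"
  shows "mech_run (j # rest) (mech gs c W eta) h =
    keep gs c W eta h * (pay (mprice gs c W h (arr j) (cur gs h)) j
        + mech_run rest (mech gs c W eta) (h @ [(j, cur gs h, mprice gs c W h (arr j) (cur gs h))]))
    + (1 - keep gs c W eta h) * (\<Sum>i<length gs. qd gs c W eta (jobs h) (length h) i *
        (pay (mprice gs c W h (arr j) i) j
        + mech_run rest (mech gs c W eta) (h @ [(j, i, mprice gs c W h (arr j) i)])))"
  unfolding mech_run.simps mech_def integral_map_pmf kern_def
  by (subst integral_mixl[OF kern_wf[OF assms] cur_lt[OF assms]]) simp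

lemma exp_quad:
  fixes y :: real
  assumes "0 \<le> y"
  shows "exp (- y) \<le> 1 - y + y\<^sup>2 / 2"
proof -
  have e: "1 + y + y\<^sup>2 / 2 \<le> exp y" using exp_lower_Taylor_quadratic[OF assms] .
  have pos: "0 < 1 + y + y\<^sup>2 / 2" using assms by (simp add: add_pos_nonneg)
  have prod: "(1 - y + y\<^sup>2 / 2) * (1 + y + y\<^sup>2 / 2) = 1 + (y\<^sup>2)\<^sup>2 / 4"
    by (simp add: power2_eq_square field_simps)
  have "exp (- y) = 1 / exp y" by (simp add: exp_minus field_simps)
  also have "\<dots> \<le> 1 / (1 + y + y\<^sup>2 / 2)" using e pos by (intro divide_left_mono) auto
  also have "\<dots> \<le> 1 - y + y\<^sup>2 / 2"
  proof -
    have "1 \<le> (1 - y + y\<^sup>2 / 2) * (1 + y + y\<^sup>2 / 2)" unfolding prod by simp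
    then show ?thesis using pos by (simp add: divide_le_eq)
  qed
  finally show ?thesis .
qed

lemma double_count:
  fixes A :: "nat \<Rightarrow> nat set"
  assumes "finite U" "finite R"
  shows "(\<Sum>u\<in>U. card (A u \<inter> R)) = (\<Sum>x\<in>R. card {u\<in>U. x \<in> A u})"
proof -
  have 1: "card (A u \<inter> R) = (\<Sum>x\<in>R. if x \<in> A u then 1 else 0)" for u
  proof -
    have "card (R \<inter> A u) = (\<Sum>x\<in>R \<inter> A u. 1)" by simp
    also have "\<dots> = (\<Sum>x\<in>R. if x \<in> A u then 1 else 0)"
      using assms(2) by (rule sum.inter_restrict)
    finally show ?thesis by (metis Int_commute)
  qed
  have 2: "card {u\<in>U. x \<in> A u} = (\<Sum>u\<in>U. if x \<in> A u then 1 else 0)" for x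
  proof -
    have e: "{u\<in>U. x \<in> A u} = U \<inter> {u. x \<in> A u}" by blast
    have "card (U \<inter> {u. x \<in> A u}) = (\<Sum>u\<in>U \<inter> {u. x \<in> A u}. 1)" by simp
    also have "\<dots> = (\<Sum>u\<in>U. if u \<in> {u. x \<in> A u} then 1 else 0)"
      using assms(1) by (rule sum.inter_restrict)
    finally show ?thesis unfolding e by simp
  qed
  show ?thesis unfolding 1 2 by (rule sum.swap)
qed


locale ojs =
  fixes N C W :: nat and c :: "nat \<Rightarrow> nat" and gs :: "policy list" and eta :: real
    and J :: "job list"
  assumes vb: "valid_bandwidth N C c"
    and fp: "\<forall>\<gamma>\<in>set gs. feasible_policy C W \<gamma>"
    and gsne: "gs \<noteq> []"
    and vjs: "valid_jobs N W J"
    and eta: "0 \<le> eta"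
begin

abbreviation "T \<equiv> length J"
abbreviation "n \<equiv> length gs"
abbreviation "MM \<equiv> mech gs c W eta"

definition g :: "nat \<Rightarrow> nat \<Rightarrow> real" where "g u i = gn gs c W J u i"
definition w :: "nat \<Rightarrow> nat \<Rightarrow> real" where "w t i = wt gs c W eta J t i"
definition Ws :: "nat \<Rightarrow> real" where "Ws t = (\<Sum>i<n. w t i)"
definition q :: "nat \<Rightarrow> nat \<Rightarrow> real" where "q t i = qd gs c W eta J t i"
definition D :: real where "D = 2 * real C * real W"
definition bet :: "nat \<Rightarrow> nat \<Rightarrow> real" where "bet t k = exp (- eta * (1 - g (t - 1) k))"
definition sells :: "nat \<Rightarrow> nat \<Rightarrow> bool" where
  "sells i u \<longleftrightarrow> alloc (snd (phist (gs ! i) c W J ! u)) (J ! u) \<noteq> {}"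
definition cnt :: "nat \<Rightarrow> nat \<Rightarrow> nat \<Rightarrow> nat" where
  "cnt i t m = card {u. t \<le> u \<and> u < T \<and> arr (J ! u) < m \<and> sells i u}"
definition mxa :: "(job \<times> nat \<times> price) list \<Rightarrow> nat" where
  "mxa h = Max (insert 0 ((\<lambda>(j, p). if alloc p j = {} then 0 else chosen p j + len j) ` set (jp h)))"
definition B :: "(job \<times> nat \<times> price) list \<Rightarrow> nat \<Rightarrow> real" where
  "B h i = (if sync gs c W h i (arr (J ! length h)) then 0 else real (cnt i (length h) (mxa h)))"

lemma vj: "u < T \<Longrightarrow> valid_job N W (J ! u)"
  using vjs unfolding valid_jobs_def by auto

lemma sortedJ: "u \<le> v \<Longrightarrow> v < T \<Longrightarrow> arr (J ! u) \<le> arr (J ! v)"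
  using vjs unfolding valid_jobs_def by (auto dest: sorted_nth_mono[where i=u and j=v])

lemma fpi: "i < n \<Longrightarrow> feasible_policy C W (gs ! i)"
  using fp by auto

lemma phist_nthJ:
  assumes "u < T"
  shows "phist (gs ! i) c W J ! u = (J ! u, pprice (gs ! i) c W (phist (gs ! i) c W (take u J)) (J ! u))"
  using phist_nth[OF assms] .

lemma price_pos:
  assumes "i < n" "u < T"
  shows "\<forall>x\<in>{arr (J ! u)..<arr (J ! u) + W}. 0 < snd (phist (gs ! i) c W J ! u) x"
  using policy_price_props[OF vb fpi[OF assms(1)]] phist_nthJ[OF assms(2)]
  unfolding pprice_def by auto

lemma g_bounds:
  assumes "i < n" "u < T"
  shows "0 \<le> g u i" "g u i \<le> (if sells i u then 1 else 0)" "g u i \<le> 1"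
proof -
  have e: "g u i = pay (snd (phist (gs ! i) c W J ! u)) (J ! u)"
    unfolding g_def gn_def using phist_nthJ[OF assms(2)] by (simp add: case_prod_beta)
  show "0 \<le> g u i" unfolding e using pay_nonneg[OF vj[OF assms(2)] price_pos[OF assms]] .
  have "pay (snd (phist (gs ! i) c W J ! u)) (J ! u) \<le> (if alloc (snd (phist (gs ! i) c W J ! u)) (J ! u) = {} then 0 else 1)"
    by (rule pay_le_sells[OF vj[OF assms(2)]])
  then show "g u i \<le> (if sells i u then 1 else 0)" unfolding e sells_def
    by (cases "alloc (snd (phist (gs ! i) c W J ! u)) (J ! u) = {}") simp_all
  then show "g u i \<le> 1" by (auto split: if_splits)
qed

lemma gn_take:
  assumes "u < t" "t \<le> T"
  shows "gn gs c W (take t J) u i = g u i"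
  unfolding g_def gn_def using assms by (simp add: phist_take)

lemma wt_take:
  assumes "t \<le> T"
  shows "wt gs c W eta (take t J) t i = w t i"
proof -
  have "(\<Sum>u<t. 1 - gn gs c W (take t J) u i) = (\<Sum>u<t. 1 - g u i)"
    by (rule sum.cong) (auto simp: gn_take assms)
  then show ?thesis unfolding wt_def w_def g_def by simp
qed

lemma qd_take:
  assumes "t \<le> T"
  shows "qd gs c W eta (take t J) t i = q t i"
  unfolding qd_def q_def using wt_take[OF assms] by (simp add: w_def)

lemma bet_range:
  assumes "1 \<le> t" "t \<le> T" "k < n"
  shows "0 < bet t k" "bet t k \<le> 1"
proof -
  have "g (t - 1) k \<le> 1" using g_bounds(3)[OF assms(3)] assms by auto
  then show "0 < bet t k" "bet t k \<le> 1" unfolding bet_def using eta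
    by (auto simp: mult_nonneg_nonneg)
qed

lemma keep_eq:
  assumes "1 \<le> t" "t \<le> T" "jobs h = take t J" "fst (snd (last h)) = k" "k < n"
  shows "keep gs c W eta h = bet t k" "cur gs h = k"
proof -
  have len: "length h = t" using assms(2,3) unfolding jobs_def by (metis length_map length_take min_absorb2)
  then have hne: "h \<noteq> []" using assms(1) by auto
  show ck: "cur gs h = k" unfolding cur_def using hne assms(4,5) by simp
  have "gn gs c W (jobs h) (length h - 1) (cur gs h) = g (t - 1) k"
    using assms len ck by (simp add: gn_take)
  then show "keep gs c W eta h = bet t k"
    unfolding keep_def using hne bet_range[OF assms(1,2,5)] unfolding bet_def by simp
qed

lemma mxa_fin: "finite (insert 0 ((\<lambda>(j, p). if alloc p j = {} then 0 else chosen p j + len j) ` set (jp h)))"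
  by simp

lemma unsync_lt:
  assumes "\<not> sync gs c W h i a"
  shows "a < mxa h"
proof -
  obtain x where x: "a \<le> x" "used (jp h) x > used (phist (gs ! i) c W (jobs h)) x"
    using assms unfolding sync_def by (auto simp: not_le)
  then obtain j p where jp: "(j, p) \<in> set (jp h)" "x \<in> alloc p j"
    using used_pos[of "jp h" x] by auto
  then have "x < chosen p j + len j" "alloc p j \<noteq> {}"
    unfolding alloc_def by (auto split: if_splits)
  moreover have "(if alloc p j = {} then 0 else chosen p j + len j) \<le> mxa h"
    unfolding mxa_def using jp(1) by (intro Max_ge[OF mxa_fin]) force
  ultimately show ?thesis using x(1) by auto
qed

lemma cnt_split:
  assumes "t < T"
  shows "cnt i t m = (if arr (J ! t) < m \<and> sells i t then 1 else 0) + cnt i (Suc t) m"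
proof -
  let ?S = "\<lambda>t. {u. t \<le> u \<and> u < T \<and> arr (J ! u) < m \<and> sells i u}"
  have eq: "?S t = (if arr (J ! t) < m \<and> sells i t then {t} else {}) \<union> ?S (Suc t)"
    using assms by (auto simp: le_less Suc_le_eq)
  have fin: "finite (?S (Suc t))" by (rule finite_subset[of _ "{..<T}"]) auto
  show ?thesis unfolding cnt_def eq using fin by (auto simp: card_insert_if)
qed

lemma cnt_T: "cnt i T m = 0"
  unfolding cnt_def by simp

lemma cnt_le:
  assumes t: "t < T" and m: "m \<le> arr (J ! t) + W" and i: "i < n"
  shows "cnt i t m \<le> 2 * W * C"
proof -
  define Hf where "Hf = phist (gs ! i) c W J"
  define A where "A u = alloc (snd (Hf ! u)) (J ! u)" for u
  define U where "U = {u. t \<le> u \<and> u < T \<and> arr (J ! u) < m \<and> sells i u}"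
  define R where "R = {arr (J ! t)..<arr (J ! t) + 2 * W}"
  have finU: "finite U" unfolding U_def by (rule finite_subset[of _ "{..<T}"]) auto
  have finR: "finite R" unfolding R_def by simp
  have AR: "A u \<subseteq> R" "A u \<noteq> {}" "finite (A u)" if "u \<in> U" for u
  proof -
    have u: "t \<le> u" "u < T" "arr (J ! u) < m" "sells i u" using that unfolding U_def by auto
    show "A u \<noteq> {}" using u(4) unfolding sells_def A_def Hf_def by simp
    show "finite (A u)" unfolding A_def alloc_def by simp
    show "A u \<subseteq> R"
    proof
      fix x assume "x \<in> A u"
      then have "arr (J ! u) \<le> x \<and> x < arr (J ! u) + W"
        using alloc_window[OF vj[OF u(2)]] unfolding A_def by blast
      moreover have "arr (J ! t) \<le> arr (J ! u)" using sortedJ u by auto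
      ultimately show "x \<in> R" using u(3) m unfolding R_def by auto
    qed
  qed
  have "cnt i t m = card U" unfolding cnt_def U_def ..
  also have "\<dots> = (\<Sum>u\<in>U. 1)" by simp
  also have "\<dots> \<le> (\<Sum>u\<in>U. card (A u \<inter> R))"
  proof (rule sum_mono)
    fix u assume "u \<in> U"
    then have "A u \<inter> R = A u" using AR by auto
    then show "1 \<le> card (A u \<inter> R)" using AR[OF \<open>u \<in> U\<close>]
      by (simp add: Suc_le_eq card_gt_0_iff)
  qed
  also have "\<dots> = (\<Sum>x\<in>R. card {u\<in>U. x \<in> A u})" using double_count[OF finU finR] .
  also have "\<dots> \<le> (\<Sum>x\<in>R. C)"
  proof (rule sum_mono)
    fix x assume "x \<in> R"
    have "{u\<in>U. x \<in> A u} \<subseteq> {u. u < length Hf \<and> (\<lambda>(j, p). x \<in> alloc p j) (Hf ! u)}"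
    proof
      fix u assume "u \<in> {u\<in>U. x \<in> A u}"
      then have "u < T" "x \<in> A u" unfolding U_def by auto
      then show "u \<in> {u. u < length Hf \<and> (\<lambda>(j, p). x \<in> alloc p j) (Hf ! u)}"
        unfolding A_def Hf_def using phist_nthJ[OF \<open>u < T\<close>, of i] by (simp add: case_prod_beta)
    qed
    then have "card {u\<in>U. x \<in> A u} \<le> card {u. u < length Hf \<and> (\<lambda>(j, p). x \<in> alloc p j) (Hf ! u)}"
      by (rule card_mono[rotated]) simp
    also have "\<dots> = used Hf x" unfolding used_def by (simp add: length_filter_conv_card)
    also have "\<dots> \<le> c x" unfolding Hf_def
      using phist_cap[OF vb fpi[OF i]] vjs unfolding valid_jobs_def by blast
    also have "\<dots> \<le> C" using vb unfolding valid_bandwidth_def by auto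
    finally show "card {u\<in>U. x \<in> A u} \<le> C" .
  qed
  also have "\<dots> = 2 * W * C" unfolding R_def by simp
  finally show ?thesis .
qed

lemma jobs_len: "jobs h = take t J \<Longrightarrow> t \<le> T \<Longrightarrow> length h = t"
  unfolding jobs_def by (metis length_map length_take min_absorb2)

lemma mxa_bound:
  assumes h: "jobs h = take t J" and t: "t < T"
  shows "mxa h \<le> arr (J ! t) + W"
  unfolding mxa_def
proof (rule Max.boundedI[OF mxa_fin])
  fix y assume "y \<in> insert 0 ((\<lambda>(j, p). if alloc p j = {} then 0 else chosen p j + len j) ` set (jp h))"
  then consider "y = 0" | j p where "(j, p) \<in> set (jp h)" "y = (if alloc p j = {} then 0 else chosen p j + len j)"
    by auto
  then show "y \<le> arr (J ! t) + W"
  proof cases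
    case 1 then show ?thesis by simp
  next
    case 2
    have "j \<in> set (jobs h)" using 2(1) unfolding jp_def jobs_def by force
    then obtain u where u: "u < t" "j = J ! u" using h t by (auto simp: in_set_conv_nth)
    have ut: "u < T" using u t by simp
    show ?thesis
    proof (cases "alloc p j = {}")
      case True then show ?thesis using 2 by simp
    next
      case False
      then obtain x where "x \<in> alloc p j" by auto
      then have "chosen p j + len j \<le> arr j + W" using alloc_bound vj[OF ut] u by blast
      moreover have "arr j \<le> arr (J ! t)" using sortedJ[of u t] u t by simp
      ultimately show ?thesis using 2 False by simp
    qed
  qed
qed simp

lemma B_nonneg: "0 \<le> B h i"
  unfolding B_def by simp

lemma B_Nil: "B [] i = 0"
  unfolding B_def sync_def jp_def by simp

lemma B_le_D:
  assumes "jobs h = take t J" "t < T" "i < n"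
  shows "B h i \<le> D"
proof -
  have "B h i \<le> real (cnt i t (mxa h))"
    unfolding B_def using jobs_len[OF assms(1)] assms(2) by simp
  also have "\<dots> \<le> real (2 * W * C)"
    using cnt_le[OF assms(2) mxa_bound[OF assms(1,2)] assms(3)] by linarith
  finally show ?thesis unfolding D_def by (simp add: mult.commute mult.left_commute)
qed

lemma core_step:
  assumes t: "t < T" and h: "jobs h = take t J" and i: "i < n"
  defines "P \<equiv> mprice gs c W h (arr (J ! t)) i"
  shows "g t i - B h i \<le> pay P (J ! t) - B (h @ [(J ! t, i, P)]) i"
proof -
  let ?j = "J ! t"
  let ?\<gamma> = "gs ! i"
  let ?h' = "h @ [(J ! t, i, P)]"
  have lh: "length h = t" using jobs_len[OF h] t by simp
  have lh': "length ?h' = Suc t" using lh by simp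
  have jh': "jobs ?h' = take (Suc t) J" using h t by (simp add: take_Suc_conv_app_nth)
  have vjj: "valid_job N W ?j" using vj[OF t] .
  show ?thesis
  proof (cases "sync gs c W h i (arr ?j)")
    case True
    have P: "P = pprice ?\<gamma> c W (phist ?\<gamma> c W (take t J)) ?j"
      unfolding P_def mprice_def pprice_def using True i h by simp
    have gP: "g t i = pay P ?j"
      unfolding g_def gn_def using phist_nthJ[OF t, of i] P by simp
    have B': "B ?h' i = 0"
    proof (cases "Suc t < T")
      case True
      have "sync gs c W ?h' i (arr (J ! Suc t))"
        unfolding sync_def
      proof (intro allI impI)
        fix x assume x: "arr (J ! Suc t) \<le> x"
        have "arr ?j \<le> arr (J ! Suc t)" using sortedJ[of t "Suc t"] True by simp
        then have "used (jp h) x \<le> used (phist ?\<gamma> c W (jobs h)) x"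
          using \<open>sync gs c W h i (arr ?j)\<close> x unfolding sync_def by auto
        moreover have "phist ?\<gamma> c W (jobs ?h') = phist ?\<gamma> c W (jobs h) @ [(?j, P)]"
          using jh' phist_take_Suc[OF t] P h by simp
        ultimately show "used (jp ?h') x \<le> used (phist ?\<gamma> c W (jobs ?h')) x" by simp
      qed
      then show ?thesis unfolding B_def lh' by simp
    next
      case False
      then have "Suc t = T" using t by simp
      then show ?thesis unfolding B_def lh' using cnt_T by simp
    qed
    show ?thesis using gP B' B_nonneg[of h i] by simp
  next
    case False
    have P: "P = (\<lambda>_. 1)" unfolding P_def mprice_def using False by simp
    have pay0: "pay P ?j = 0" and al0: "alloc P ?j = {}" using ones_props[OF vjj] P by auto
    have mx: "mxa ?h' = mxa h"
    proof -
      have "set (jp ?h') = insert (?j, P) (set (jp h))" by simp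
      then show ?thesis unfolding mxa_def using al0 by (simp add: insert_commute)
    qed
    have Bh: "B h i = real (cnt i t (mxa h))" unfolding B_def lh using False by simp
    have Bh': "B ?h' i \<le> real (cnt i (Suc t) (mxa h))" unfolding B_def lh' mx by simp
    have lt: "arr ?j < mxa h" using unsync_lt[OF False] .
    have "cnt i t (mxa h) = (if sells i t then 1 else 0) + cnt i (Suc t) (mxa h)"
      using cnt_split[OF t] lt by simp
    moreover have "g t i \<le> (if sells i t then 1 else 0)" using g_bounds(2)[OF i t] .
    ultimately show ?thesis using Bh Bh' pay0 by (auto split: if_splits)
  qed
qed

fun Vr :: "nat \<Rightarrow> nat \<Rightarrow> nat \<Rightarrow> real" where
  "Vr 0 t k = 0"
| "Vr (Suc m) t k = bet t k * (g t k + Vr m (Suc t) k)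
     + (1 - bet t k) * ((\<Sum>i<n. q t i * (g t i + Vr m (Suc t) i)) - D)"

lemma q_sum: "(\<Sum>i<n. q t i) = 1"
  unfolding q_def using qd_sum[OF gsne] .

lemma q_nonneg: "0 \<le> q t i"
  unfolding q_def by (rule qd_nonneg)

lemma step_bound:
  assumes t: "t < T" and h: "jobs h = take t J" and i: "i < n"
    and IH: "Vr m (Suc t) i - B (h @ [(J ! t, i, mprice gs c W h (arr (J ! t)) i)]) i
       \<le> mech_run (drop (Suc t) J) MM (h @ [(J ! t, i, mprice gs c W h (arr (J ! t)) i)])"
  shows "g t i + Vr m (Suc t) i - B h i \<le> pay (mprice gs c W h (arr (J ! t)) i) (J ! t)
       + mech_run (drop (Suc t) J) MM (h @ [(J ! t, i, mprice gs c W h (arr (J ! t)) i)])"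
  using core_step[OF t h i] IH by simp

lemma main_ind:
  "t + m = T \<Longrightarrow> 1 \<le> t \<Longrightarrow> jobs h = take t J \<Longrightarrow> fst (snd (last h)) = k \<Longrightarrow> k < n
   \<Longrightarrow> Vr m t k - B h k \<le> mech_run (drop t J) MM h"
proof (induction m arbitrary: t h k)
  case 0
  then show ?case using B_nonneg[of h k] by simp
next
  case (Suc m)
  have t: "t < T" using Suc.prems by simp
  have lh: "length h = t" using jobs_len[OF Suc.prems(3)] t by simp
  define P where "P i = mprice gs c W h (arr (J ! t)) i" for i
  define F where "F i = pay (P i) (J ! t) + mech_run (drop (Suc t) J) MM (h @ [(J ! t, i, P i)])" for i
  have dropt: "drop t J = J ! t # drop (Suc t) J" using t by (simp add: Cons_nth_drop_Suc)
  have ke: "keep gs c W eta h = bet t k" "cur gs h = k"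
    using keep_eq[OF Suc.prems(2) _ Suc.prems(3,4,5)] t by auto
  have qe: "qd gs c W eta (jobs h) (length h) = q t"
    using qd_take[of t] t Suc.prems(3) lh by auto
  have run: "mech_run (drop t J) MM h = bet t k * F k + (1 - bet t k) * (\<Sum>i<n. q t i * F i)"
    unfolding dropt mech_run_step[OF gsne] ke qe F_def P_def ..
  have FA: "g t i + Vr m (Suc t) i - B h i \<le> F i" if i: "i < n" for i
  proof -
    have jh: "jobs (h @ [(J ! t, i, P i)]) = take (Suc t) J"
      using Suc.prems(3) t by (simp add: take_Suc_conv_app_nth)
    have "Vr m (Suc t) i - B (h @ [(J ! t, i, P i)]) i \<le> mech_run (drop (Suc t) J) MM (h @ [(J ! t, i, P i)])"
      using Suc.IH[of "Suc t" "h @ [(J ! t, i, P i)]" i] Suc.prems(1) jh i by simp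
    then show ?thesis unfolding F_def P_def using step_bound[OF t Suc.prems(3) i] by simp
  qed
  have FD: "g t i + Vr m (Suc t) i - D \<le> F i" if i: "i < n" for i
    using FA[OF i] B_le_D[OF Suc.prems(3) t i] by simp
  have b: "0 < bet t k" "bet t k \<le> 1" using bet_range[OF Suc.prems(2) _ Suc.prems(5)] t by auto
  have 1: "bet t k * (g t k + Vr m (Suc t) k) - B h k \<le> bet t k * F k"
  proof -
    have "bet t k * (g t k + Vr m (Suc t) k - B h k) \<le> bet t k * F k"
      using FA[OF Suc.prems(5)] b by (intro mult_left_mono) auto
    moreover have "bet t k * B h k \<le> B h k" using b B_nonneg[of h k]
      by (simp add: mult_left_le_one_le)
    ultimately show ?thesis by (simp add: algebra_simps)
  qed
  have 2: "(\<Sum>i<n. q t i * (g t i + Vr m (Suc t) i)) - D \<le> (\<Sum>i<n. q t i * F i)"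
  proof -
    have "(\<Sum>i<n. q t i * (g t i + Vr m (Suc t) i)) - D = (\<Sum>i<n. q t i * (g t i + Vr m (Suc t) i - D))"
      using q_sum[of t] by (simp add: algebra_simps sum_subtractf sum_distrib_left[symmetric])
    also have "\<dots> \<le> (\<Sum>i<n. q t i * F i)"
      using FD q_nonneg by (intro sum_mono mult_left_mono) auto
    finally show ?thesis .
  qed
  have "Vr (Suc m) t k - B h k \<le> bet t k * F k + (1 - bet t k) * (\<Sum>i<n. q t i * F i)"
    using 1 mult_left_mono[OF 2, of "1 - bet t k"] b by simp
  then show ?case unfolding run .
qed

lemma start_bound:
  assumes T: "1 \<le> T"
  shows "(\<Sum>i<n. q 0 i * (g 0 i + Vr (T - 1) 1 i)) \<le> mech_run J MM []"
proof -
  have t: "0 < T" using T by linarith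
  then have Jne: "J \<noteq> []" by auto
  define P where "P i = mprice gs c W [] (arr (J ! 0)) i" for i
  define F where "F i = pay (P i) (J ! 0) + mech_run (drop 1 J) MM [(J ! 0, i, P i)]" for i
  have dropt: "J = J ! 0 # drop 1 J" using Jne by (cases J) auto
  have ke: "keep gs c W eta [] = 0" unfolding keep_def by simp
  have qe: "qd gs c W eta (jobs []) 0 = q 0"
    using qd_take[of 0] unfolding jobs_def by auto
  have run: "mech_run J MM [] = (\<Sum>i<n. q 0 i * F i)"
    by (subst dropt, subst mech_run_step[OF gsne]) (simp add: ke qe F_def P_def)
  have FA: "g 0 i + Vr (T - 1) 1 i \<le> F i" if i: "i < n" for i
  proof -
    have jh: "jobs [(J ! 0, i, P i)] = take 1 J" using t unfolding jobs_def
      by (simp add: take_Suc_conv_app_nth)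
    have "Vr (T - 1) 1 i - B [(J ! 0, i, P i)] i \<le> mech_run (drop 1 J) MM [(J ! 0, i, P i)]"
      using main_ind[of 1 "T - 1" "[(J ! 0, i, P i)]" i] T jh i by simp
    moreover have "g 0 i - B [] i \<le> pay (P i) (J ! 0) - B [(J ! 0, i, P i)] i"
      using core_step[OF t _ i, of "[]"] unfolding P_def jobs_def by simp
    ultimately show ?thesis unfolding F_def using B_Nil[of i] by simp
  qed
  show ?thesis unfolding run using FA q_nonneg by (intro sum_mono mult_left_mono) auto
qed

lemma w_pos: "0 < w t i"
  unfolding w_def by (rule wt_pos)

lemma Ws_pos: "0 < Ws t"
  unfolding Ws_def using gsne w_pos by (intro sum_pos) auto

lemma q_eq: "q t i = w t i / Ws t"
  unfolding q_def qd_def w_def Ws_def ..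

lemma w_Suc: "w (Suc t) i = w t i * exp (- eta * (1 - g t i))"
  unfolding w_def wt_def g_def by (simp add: distrib_left exp_add[symmetric])

lemma w_0: "w 0 i = 1"
  unfolding w_def wt_def by simp

lemma Ws_0: "Ws 0 = real n"
  unfolding Ws_def w_0 by simp

lemma bet_eq: "bet (Suc s) k = w (Suc s) k / w s k"
  unfolding bet_def using w_Suc[of s k] w_pos[of s k] by simp

lemma stat_step:
  "(\<Sum>k<n. q s k * (bet (Suc s) k * x k + (1 - bet (Suc s) k) * ((\<Sum>i<n. q (Suc s) i * x i) - D)))
   = (\<Sum>i<n. q (Suc s) i * x i) - D * (1 - Ws (Suc s) / Ws s)"
proof -
  define S where "S = (\<Sum>i<n. q (Suc s) i * x i)"
  define \<rho> where "\<rho> = Ws (Suc s) / Ws s"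
  have p1: "q s k * bet (Suc s) k = w (Suc s) k / Ws s" for k
    unfolding q_eq bet_eq using w_pos[of s k] by simp
  have A: "(\<Sum>k<n. q s k * bet (Suc s) k * x k) = \<rho> * S"
  proof -
    have "(\<Sum>k<n. q s k * bet (Suc s) k * x k) = (\<Sum>k<n. w (Suc s) k * x k) / Ws s"
      unfolding p1 by (simp add: sum_divide_distrib)
    also have "\<dots> = \<rho> * S"
      unfolding \<rho>_def S_def q_eq using Ws_pos[of "Suc s"]
      by (simp add: sum_divide_distrib[symmetric])
    finally show ?thesis .
  qed
  have B0: "(\<Sum>k<n. q s k * (1 - bet (Suc s) k)) = 1 - \<rho>"
  proof -
    have "(\<Sum>k<n. q s k * (1 - bet (Suc s) k)) = (\<Sum>k<n. q s k) - (\<Sum>k<n. w (Suc s) k / Ws s)"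
      unfolding p1[symmetric] by (simp add: algebra_simps sum_subtractf)
    also have "\<dots> = 1 - \<rho>" unfolding q_sum \<rho>_def Ws_def by (simp add: sum_divide_distrib)
    finally show ?thesis .
  qed
  have "(\<Sum>k<n. q s k * (bet (Suc s) k * x k + (1 - bet (Suc s) k) * (S - D)))
      = (\<Sum>k<n. q s k * bet (Suc s) k * x k + q s k * (1 - bet (Suc s) k) * (S - D))"
    by (rule sum.cong) (simp_all add: algebra_simps)
  also have "\<dots> = (\<Sum>k<n. q s k * bet (Suc s) k * x k) + (\<Sum>k<n. q s k * (1 - bet (Suc s) k)) * (S - D)"
    by (simp add: sum.distrib sum_distrib_right)
  also have "\<dots> = S - D * (1 - \<rho>)" unfolding A B0 by (simp add: algebra_simps)
  finally show ?thesis unfolding S_def \<rho>_def .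
qed

lemma stat_sum:
  "1 \<le> t \<Longrightarrow> (\<Sum>k<n. q (t - 1) k * Vr m t k)
     = (\<Sum>u\<in>{t..<t + m}. (\<Sum>i<n. q u i * g u i) - D * (1 - Ws u / Ws (u - 1)))"
proof (induction m arbitrary: t)
  case 0 then show ?case by simp
next
  case (Suc m)
  obtain s where s: "t = Suc s" using Suc.prems by (cases t) auto
  define x where "x i = g t i + Vr m (Suc t) i" for i
  have "(\<Sum>k<n. q (t - 1) k * Vr (Suc m) t k)
      = (\<Sum>k<n. q s k * (bet (Suc s) k * x k + (1 - bet (Suc s) k) * ((\<Sum>i<n. q (Suc s) i * x i) - D)))"
    unfolding s x_def by simp
  also have "\<dots> = (\<Sum>i<n. q t i * x i) - D * (1 - Ws t / Ws (t - 1))"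
    unfolding stat_step s by simp
  also have "(\<Sum>i<n. q t i * x i) = (\<Sum>i<n. q t i * g t i) + (\<Sum>i<n. q (Suc t - 1) i * Vr m (Suc t) i)"
    unfolding x_def by (simp add: algebra_simps sum.distrib)
  also have "(\<Sum>i<n. q (Suc t - 1) i * Vr m (Suc t) i)
      = (\<Sum>u\<in>{Suc t..<Suc t + m}. (\<Sum>i<n. q u i * g u i) - D * (1 - Ws u / Ws (u - 1)))"
    using Suc.IH[of "Suc t"] by simp
  finally show ?case by (simp add: sum.atLeast_Suc_lessThan)
qed

lemma mech_lower:
  assumes T: "1 \<le> T"
  shows "(\<Sum>u<T. \<Sum>i<n. q u i * g u i) - D * (\<Sum>u\<in>{1..<T}. 1 - Ws u / Ws (u - 1)) \<le> mech_run J MM []"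
proof -
  have "(\<Sum>i<n. q 0 i * (g 0 i + Vr (T - 1) 1 i))
      = (\<Sum>i<n. q 0 i * g 0 i) + (\<Sum>i<n. q (1 - 1) i * Vr (T - 1) 1 i)"
    by (simp add: algebra_simps sum.distrib)
  also have "\<dots> = (\<Sum>i<n. q 0 i * g 0 i) + (\<Sum>u\<in>{1..<T}. (\<Sum>i<n. q u i * g u i) - D * (1 - Ws u / Ws (u - 1)))"
  proof -
    have Tm: "1 + (T - 1) = T" using T by simp
    have "(\<Sum>i<n. q (1 - 1) i * Vr (T - 1) 1 i) = (\<Sum>u\<in>{1..<T}. (\<Sum>i<n. q u i * g u i) - D * (1 - Ws u / Ws (u - 1)))"
      using stat_sum[of 1 "T - 1", unfolded Tm] by simp
    then show ?thesis by simp
  qed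
  also have "\<dots> = (\<Sum>u<T. \<Sum>i<n. q u i * g u i) - D * (\<Sum>u\<in>{1..<T}. 1 - Ws u / Ws (u - 1))"
  proof -
    have "(\<Sum>u<T. \<Sum>i<n. q u i * g u i) = (\<Sum>i<n. q 0 i * g 0 i) + (\<Sum>u\<in>{1..<T}. \<Sum>i<n. q u i * g u i)"
    proof -
      define F where "F u = (\<Sum>i<n. q u i * g u i)" for u
      have "(\<Sum>u<T. F u) = (\<Sum>u\<in>{0..<T}. F u)" by (simp only: atLeast0LessThan)
      also have "\<dots> = F 0 + (\<Sum>u\<in>{Suc 0..<T}. F u)"
        by (rule sum.atLeast_Suc_lessThan) (use T in linarith)
      finally show ?thesis unfolding F_def by simp
    qed
    moreover have "(\<Sum>u\<in>{1..<T}. (\<Sum>i<n. q u i * g u i) - D * (1 - Ws u / Ws (u - 1)))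
        = (\<Sum>u\<in>{1..<T}. (\<Sum>i<n. q u i * g u i)) - D * (\<Sum>u\<in>{1..<T}. 1 - Ws u / Ws (u - 1))"
      by (simp add: sum_subtractf right_diff_distrib sum_distrib_left)
    ultimately show ?thesis by simp
  qed
  finally show ?thesis using start_bound[OF T] by simp
qed

lemma w_exp: "w t i = exp (- eta * (\<Sum>u<t. 1 - g u i))"
  unfolding w_def wt_def g_def ..

lemma ln_Ws_lower:
  assumes "t \<le> T" "i < n"
  shows "- eta * (\<Sum>u<t. 1 - g u i) \<le> ln (Ws t)"
proof -
  have "w t i \<le> Ws t" unfolding Ws_def
    using assms(2) w_pos by (intro member_le_sum) (auto simp: less_imp_le)
  then have "ln (w t i) \<le> ln (Ws t)" using w_pos[of t i] Ws_pos[of t] by simp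
  then show ?thesis unfolding w_exp by simp
qed

lemma switch_bound:
  assumes T: "1 \<le> T"
  shows "(\<Sum>u\<in>{1..<T}. 1 - Ws u / Ws (u - 1)) \<le> ln (real n) + eta * T"
proof -
  have n0: "0 < n" using gsne by simp
  have "(\<Sum>u\<in>{1..<T}. 1 - Ws u / Ws (u - 1)) = (\<Sum>u\<in>{0..<T - 1}. 1 - Ws (Suc u) / Ws u)"
  proof -
    have "Suc (T - 1) = T" using T by linarith
    then have "{1..<T} = {Suc 0..<Suc (T - 1)}" by simp
    then show ?thesis by (simp only: sum.shift_bounds_Suc_ivl) simp
  qed
  also have "\<dots> \<le> (\<Sum>u\<in>{0..<T - 1}. ln (Ws u) - ln (Ws (Suc u)))"
  proof (rule sum_mono)
    fix u
    have "ln (Ws (Suc u) / Ws u) \<le> Ws (Suc u) / Ws u - 1"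
      using Ws_pos by (intro ln_le_minus_one) (simp add: divide_pos_pos)
    then show "1 - Ws (Suc u) / Ws u \<le> ln (Ws u) - ln (Ws (Suc u))"
      using Ws_pos[of u] Ws_pos[of "Suc u"] by (simp add: ln_div)
  qed
  also have "\<dots> = ln (Ws 0) - ln (Ws (T - 1))"
    using sum_lessThan_telescope'[of "\<lambda>u. ln (Ws u)" "T - 1"] by (simp add: atLeast0LessThan)
  also have "\<dots> \<le> ln (real n) + eta * T"
  proof -
    have "- eta * (\<Sum>u<T - 1. 1 - g u 0) \<le> ln (Ws (T - 1))"
      using ln_Ws_lower[of "T - 1" 0] n0 by simp
    moreover have "(\<Sum>u<T - 1. 1 - g u 0) \<le> (\<Sum>u<T - 1. 1)"
      using g_bounds(1)[OF n0] by (intro sum_mono) auto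
    then have "eta * (\<Sum>u<T - 1. 1 - g u 0) \<le> eta * T" using eta
      by (intro mult_left_mono) auto
    ultimately show ?thesis unfolding Ws_0 by simp
  qed
  finally show ?thesis .
qed

lemma hedge:
  assumes e: "0 < eta" and i: "i < n"
  shows "(\<Sum>u<T. g u i) - ln (real n) / eta - eta * T / 2 \<le> (\<Sum>u<T. \<Sum>k<n. q u k * g u k)"
proof -
  define QG where "QG u = (\<Sum>k<n. q u k * g u k)" for u
  have step: "ln (Ws (Suc u)) - ln (Ws u) \<le> - eta * (1 - QG u) + eta\<^sup>2 / 2" if u: "u < T" for u
  proof -
    have ratio: "Ws (Suc u) / Ws u = (\<Sum>k<n. q u k * exp (- (eta * (1 - g u k))))"
      unfolding Ws_def q_eq w_Suc by (simp add: sum_divide_distrib Ws_def)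
    have b: "exp (- (eta * (1 - g u k))) \<le> 1 - eta * (1 - g u k) + eta\<^sup>2 / 2" if k: "k < n" for k
    proof -
      have gk: "0 \<le> 1 - g u k" "1 - g u k \<le> 1" using g_bounds[OF k u] by auto
      have "exp (- (eta * (1 - g u k))) \<le> 1 - eta * (1 - g u k) + (eta * (1 - g u k))\<^sup>2 / 2"
        using gk e by (intro exp_quad) simp
      moreover have "(eta * (1 - g u k))\<^sup>2 \<le> eta\<^sup>2"
        using gk e by (simp add: power_mult_distrib mult_le_cancel_left1 power_le_one)
      ultimately show ?thesis by simp
    qed
    have "Ws (Suc u) / Ws u \<le> (\<Sum>k<n. q u k * (1 - eta * (1 - g u k) + eta\<^sup>2 / 2))"
      unfolding ratio using b q_nonneg by (intro sum_mono mult_left_mono) auto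
    also have "\<dots> = (\<Sum>k<n. q u k * (1 - eta + eta\<^sup>2 / 2) + eta * (q u k * g u k))"
      by (rule sum.cong) (simp_all add: algebra_simps)
    also have "\<dots> = (\<Sum>k<n. q u k) * (1 - eta + eta\<^sup>2 / 2) + eta * QG u"
      unfolding QG_def by (simp add: sum.distrib sum_distrib_left sum_distrib_right)
    also have "\<dots> = 1 - eta * (1 - QG u) + eta\<^sup>2 / 2" unfolding q_sum by (simp add: algebra_simps)
    finally have r: "Ws (Suc u) / Ws u \<le> 1 - eta * (1 - QG u) + eta\<^sup>2 / 2" .
    have "ln (Ws (Suc u) / Ws u) \<le> Ws (Suc u) / Ws u - 1"
      using Ws_pos by (intro ln_le_minus_one) (simp add: divide_pos_pos)
    then show ?thesis using r Ws_pos[of u] Ws_pos[of "Suc u"] by (simp add: ln_div)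
  qed
  have "ln (Ws T) - ln (Ws 0) = (\<Sum>u<T. ln (Ws (Suc u)) - ln (Ws u))"
    using sum_lessThan_telescope[of "\<lambda>u. ln (Ws u)" T] by simp
  also have "\<dots> \<le> (\<Sum>u<T. - eta * (1 - QG u) + eta\<^sup>2 / 2)"
    using step by (intro sum_mono) auto
  also have "\<dots> = - eta * T + eta * (\<Sum>u<T. QG u) + T * eta\<^sup>2 / 2"
    by (simp add: sum.distrib sum_distrib_left algebra_simps sum_subtractf)
  finally have up: "ln (Ws T) - ln (real n) \<le> - eta * T + eta * (\<Sum>u<T. QG u) + T * eta\<^sup>2 / 2"
    unfolding Ws_0 .
  have low: "- eta * (T - (\<Sum>u<T. g u i)) \<le> ln (Ws T)"
    using ln_Ws_lower[of T i] i by (simp add: sum_subtractf)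
  have "eta * (\<Sum>u<T. g u i) \<le> ln (real n) + eta * (\<Sum>u<T. QG u) + T * eta\<^sup>2 / 2"
    using up low by (simp add: algebra_simps)
  then have "eta * ((\<Sum>u<T. g u i) - ln (real n) / eta - eta * T / 2) \<le> eta * (\<Sum>u<T. QG u)"
    using e by (simp add: algebra_simps power2_eq_square)
  then show ?thesis unfolding QG_def using e by simp
qed

lemma mprice_pos:
  assumes "x \<in> {a..<a + W}"
  shows "0 < mprice gs c W h a i x"
proof (cases "i < n \<and> sync gs c W h i a")
  case True
  then show ?thesis unfolding mprice_def
    using policy_price_props[OF vb fpi assms] by auto
next
  case False
  then show ?thesis unfolding mprice_def by auto
qed

lemma mech_nonneg_gen:
  "\<forall>j\<in>set js. valid_job N W j \<Longrightarrow> 0 \<le> mech_run js MM h"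
proof (induction js arbitrary: h)
  case Nil then show ?case by simp
next
  case (Cons j js)
  have vjj: "valid_job N W j" using Cons.prems by simp
  define F where "F i = pay (mprice gs c W h (arr j) i) j
        + mech_run js MM (h @ [(j, i, mprice gs c W h (arr j) i)])" for i
  have F: "0 \<le> F i" for i
    unfolding F_def using pay_nonneg[OF vjj] mprice_pos Cons.IH Cons.prems by auto
  have "0 \<le> keep gs c W eta h * F (cur gs h) + (1 - keep gs c W eta h) *
       (\<Sum>i<n. qd gs c W eta (jobs h) (length h) i * F i)"
    using keep_range[of gs c W eta h] F qd_nonneg
    by (intro add_nonneg_nonneg mult_nonneg_nonneg sum_nonneg) auto
  then show ?case unfolding mech_run_step[OF gsne] F_def .
qed

lemma mech_nonneg: "0 \<le> mech_run J MM []"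
  using mech_nonneg_gen vjs unfolding valid_jobs_def by blast

lemma policy_rev: "i < n \<Longrightarrow> policy_revenue (gs ! i) c W J = (\<Sum>u<T. g u i)"
  unfolding policy_revenue_eq g_def gn_def by simp

lemma G_le_T: "i < n \<Longrightarrow> (\<Sum>u<T. g u i) \<le> real T"
proof -
  assume i: "i < n"
  have "(\<Sum>u<T. g u i) \<le> (\<Sum>u<T. 1)" using g_bounds(3)[OF i] by (intro sum_mono) auto
  then show ?thesis by simp
qed

lemma C0_g: assumes "C = 0" "i < n" "u < T" shows "g u i = 0"
proof -
  have "\<not> sells i u"
  proof
    assume "sells i u"
    define Hf where "Hf = phist (gs ! i) c W J"
    obtain x where x: "x \<in> alloc (snd (Hf ! u)) (J ! u)"
      using \<open>sells i u\<close> unfolding sells_def Hf_def by auto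
    have "u \<in> {v. v < length Hf \<and> (\<lambda>(j, p). x \<in> alloc p j) (Hf ! v)}"
      using x assms(3) phist_nthJ[OF assms(3), of i] unfolding Hf_def by (simp add: case_prod_beta)
    then have "0 < card {v. v < length Hf \<and> (\<lambda>(j, p). x \<in> alloc p j) (Hf ! v)}"
      by (subst card_gt_0_iff) auto
    then have "0 < used Hf x" unfolding used_def by (simp add: length_filter_conv_card)
    moreover have "used Hf x \<le> c x" unfolding Hf_def
      using phist_cap[OF vb fpi[OF assms(2)]] vjs unfolding valid_jobs_def by blast
    moreover have "c x \<le> C" using vb unfolding valid_bandwidth_def by auto
    ultimately show False using assms(1) by simp
  qed
  then show ?thesis using g_bounds(1,2)[OF assms(2,3)] by simp
qed

lemma regret_gen:
  assumes T: "1 \<le> T" and i: "i < n"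
  shows "policy_revenue (gs ! i) c W J - mech_run J MM []
    \<le> ((\<Sum>u<T. g u i) - (\<Sum>u<T. \<Sum>k<n. q u k * g u k)) + D * (ln (real n) + eta * T)"
proof -
  have D0: "0 \<le> D" unfolding D_def by simp
  have "D * (\<Sum>u\<in>{1..<T}. 1 - Ws u / Ws (u - 1)) \<le> D * (ln (real n) + eta * T)"
    using switch_bound[OF T] D0 by (intro mult_left_mono) auto
  then show ?thesis using mech_lower[OF T] policy_rev[OF i] by simp
qed

end


lemma final_arith:
  fixes X T L eta :: real
  assumes X: "1 \<le> X" and T: "0 < T" and L: "0 < L" and XL: "X * L \<le> T"
    and eta: "eta = sqrt (L / (X * T))"
  shows "L / eta + eta * T / 2 + 2 * X * (L + eta * T) \<le> 6 * sqrt (X * T * L)"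
proof -
  define s where "s = sqrt (X * T * L)"
  have XTpos: "0 < X * T" using X T by simp
  have spos: "0 < s" unfolding s_def using X T L by simp
  have s2: "s\<^sup>2 = X * T * L" unfolding s_def using X T L by simp
  have "L / (X * T) = (s / (X * T))\<^sup>2"
    using s2 XTpos by (simp add: power_divide power2_eq_square field_simps)
  then have eta_s: "eta = s / (X * T)"
    unfolding eta using spos XTpos by (simp add: real_sqrt_abs)
  have t1: "L / eta = s"
  proof -
    have "L / eta = L * X * T / s" unfolding eta_s using XTpos spos by (simp add: field_simps)
    also have "\<dots> = s" using s2 spos by (simp add: power2_eq_square field_simps)
    finally show ?thesis .
  qed
  have t2: "eta * T / 2 \<le> s / 2"
  proof -
    have "eta * T = s / X" unfolding eta_s using X T by (simp add: field_simps)
    also have "\<dots> \<le> s" using X spos by (simp add: divide_le_eq)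
    finally show ?thesis by simp
  qed
  have t3: "X * L \<le> s"
  proof -
    have "(X * L)\<^sup>2 \<le> X * L * T" using XL X L by (simp add: power2_eq_square mult_left_mono)
    then have "sqrt ((X * L)\<^sup>2) \<le> sqrt (X * T * L)" by (simp add: algebra_simps)
    then show ?thesis unfolding s_def using X L by simp
  qed
  have t4: "X * (eta * T) = s" unfolding eta_s using X T by (simp add: field_simps)
  have "L / eta + eta * T / 2 + 2 * X * (L + eta * T) = L / eta + eta * T / 2 + 2 * (X * L) + 2 * (X * (eta * T))"
    by (simp add: algebra_simps)
  also have "\<dots> \<le> s + s / 2 + 2 * s + 2 * s" using t1 t2 t3 t4 by linarith
  also have "\<dots> \<le> 6 * s" using spos by simp
  finally show ?thesis unfolding s_def .
qed

lemma small_arith: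
  fixes X T L :: real
  assumes "0 \<le> T" "T < X * L"
  shows "T \<le> 6 * sqrt (X * T * L)"
proof -
  have "T * T \<le> T * (X * L)" using assms by (intro mult_left_mono) auto
  then have "T\<^sup>2 \<le> X * T * L" by (simp add: power2_eq_square mult.commute mult.left_commute)
  then have "sqrt (T\<^sup>2) \<le> sqrt (X * T * L)" by (rule real_sqrt_le_mono)
  then have "T \<le> sqrt (X * T * L)" using assms(1) by simp
  moreover have "0 \<le> X * L" using assms by linarith
  then have "0 \<le> T * (X * L)" using assms(1) by simp
  then have "0 \<le> sqrt (X * T * L)" by (simp add: ac_simps)
  ultimately show ?thesis by linarith
qed

theorem corollary2:
  shows "\<exists>K::real. 0 < K \<and>
    (\<forall>(N::nat) (C::nat) (W::nat) (c::nat \<Rightarrow> nat) (\<Gamma>::policy set) (T::nat).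
       valid_bandwidth N C c \<longrightarrow> finite \<Gamma> \<longrightarrow> \<Gamma> \<noteq> {} \<longrightarrow>
       (\<forall>\<gamma>\<in>\<Gamma>. feasible_policy C W \<gamma>) \<longrightarrow>
       (\<exists>M. feasible_mech c W M \<and>
          (\<forall>js. length js = T \<longrightarrow> valid_jobs N W js \<longrightarrow>
             regret \<Gamma> c W M js \<le>
               K * sqrt (real C * real W * real T * ln (real (card \<Gamma>))))))"
proof (intro exI[of _ 6] conjI allI impI)
  fix N C W :: nat and c :: "nat \<Rightarrow> nat" and \<Gamma> :: "policy set" and T :: nat
  assume vb: "valid_bandwidth N C c" and fin: "finite \<Gamma>" and ne: "\<Gamma> \<noteq> {}"
    and fpG: "\<forall>\<gamma>\<in>\<Gamma>. feasible_policy C W \<gamma>"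
  obtain gs where gs: "set gs = \<Gamma>" "distinct gs" using finite_distinct_list[OF fin] by blast
  have ncard: "length gs = card \<Gamma>" using gs distinct_card by metis
  have gsne: "gs \<noteq> []" using gs ne by auto
  have fp: "\<forall>\<gamma>\<in>set gs. feasible_policy C W \<gamma>" using gs fpG by simp
  define L where "L = ln (real (card \<Gamma>))"
  define X where "X = real C * real W"
  define eta where "eta = (if 2 \<le> card \<Gamma> \<and> 0 < X * real T then sqrt (L / (X * real T)) else 0)"
  have eta0: "0 \<le> eta" unfolding eta_def L_def by (auto intro!: divide_nonneg_pos)
  show "\<exists>M. feasible_mech c W M \<and>
          (\<forall>js. length js = T \<longrightarrow> valid_jobs N W js \<longrightarrow>
             regret \<Gamma> c W M js \<le> 6 * sqrt (real C * real W * real T * ln (real (card \<Gamma>))))"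
  proof (intro exI[of _ "mech gs c W eta"] conjI allI impI)
    show "feasible_mech c W (mech gs c W eta)" using mech_feasible[OF vb fp] .
    fix js assume lenT: "length js = T" and vjs: "valid_jobs N W js"
    interpret O: ojs N C W c gs eta js
      using vb fp gsne vjs eta0 by unfold_locales
    define RHS where "RHS = 6 * sqrt (real C * real W * real T * ln (real (card \<Gamma>)))"
    have c1: "1 \<le> card \<Gamma>" using fin ne by (simp add: Suc_le_eq card_gt_0_iff)
    have RHS0: "0 \<le> RHS" unfolding RHS_def using c1 by simp
    have RHSX: "RHS = 6 * sqrt (X * real T * L)" unfolding RHS_def X_def L_def
      by (simp add: mult.assoc)
    have per: "policy_revenue (gs ! i) c W js - mech_run js (mech gs c W eta) [] \<le> RHS"
      if i: "i < length gs" for i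
    proof -
      have mn: "0 \<le> mech_run js (mech gs c W eta) []" by (rule O.mech_nonneg)
      have pr: "policy_revenue (gs ! i) c W js = (\<Sum>u<T. O.g u i)" using O.policy_rev[OF i] lenT by simp
      show ?thesis
      proof (cases "T = 0 \<or> C = 0")
        case True
        have "(\<Sum>u<T. O.g u i) = 0"
        proof (cases "T = 0")
          case False
          then have "C = 0" using True by simp
          then show ?thesis using O.C0_g[OF _ i] lenT by simp
        qed simp
        then show ?thesis using pr mn RHS0 by simp
      next
        case False
        then have T1: "1 \<le> T" and C1: "1 \<le> C" by auto
        have "valid_job N W (js ! 0)" using O.vj T1 lenT by simp
        then have W1: "1 \<le> W" unfolding valid_job_def by auto
        have "1 * 1 \<le> C * W" by (rule mult_le_mono[OF C1 W1])
        then have "real 1 \<le> real (C * W)" by (simp only: of_nat_le_iff)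
        then have X1: "1 \<le> X" unfolding X_def by (metis of_nat_1 of_nat_mult)
        have gen: "policy_revenue (gs ! i) c W js - mech_run js (mech gs c W eta) []
            \<le> ((\<Sum>u<T. O.g u i) - (\<Sum>u<T. \<Sum>k<length gs. O.q u k * O.g u k)) + O.D * (L + eta * T)"
          using O.regret_gen[of i] T1 i lenT unfolding L_def ncard by simp
        show ?thesis
        proof (cases "card \<Gamma> = 1")
          case True
          then have n1: "length gs = 1" using ncard by simp
          then have i0: "i = 0" using i by simp
          have L0: "L = 0" unfolding L_def using True by simp
          have e0: "eta = 0" unfolding eta_def using True by simp
          have "(\<Sum>k<length gs. O.q u k * O.g u k) = O.g u i" for u
          proof -
            have "O.q u 0 = 1" using O.q_sum[of u] n1 by simp
            then show ?thesis using n1 i0 by simp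
          qed
          then show ?thesis using gen L0 e0 RHS0 by simp
        next
          case False
          then have n2: "2 \<le> card \<Gamma>" using ncard gsne
            using c1 by linarith
          have Lpos: "0 < L" unfolding L_def using n2 by simp
          show ?thesis
          proof (cases "X * L \<le> real T")
            case True
            have XT: "0 < X * real T" using X1 T1 by simp
            have eta_eq: "eta = sqrt (L / (X * real T))" unfolding eta_def using n2 XT by simp
            have epos: "0 < eta" unfolding eta_eq using Lpos XT by simp
            have h: "(\<Sum>u<T. O.g u i) - (\<Sum>u<T. \<Sum>k<length gs. O.q u k * O.g u k) \<le> L / eta + eta * T / 2"
              using O.hedge[OF epos i] lenT unfolding L_def ncard by simp
            have D: "O.D = 2 * X" unfolding O.D_def X_def by simp
            have "policy_revenue (gs ! i) c W js - mech_run js (mech gs c W eta) []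
                \<le> L / eta + eta * T / 2 + 2 * X * (L + eta * T)"
              using gen h D by simp
            also have "\<dots> \<le> 6 * sqrt (X * real T * L)"
              using final_arith[OF X1 _ Lpos True eta_eq] T1 by simp
            finally show ?thesis unfolding RHSX .
          next
            case False
            have "real T \<le> 6 * sqrt (X * real T * L)"
              using small_arith[of "real T" X L] False by simp
            moreover have "(\<Sum>u<T. O.g u i) \<le> real T" using O.G_le_T[OF i] lenT by simp
            ultimately show ?thesis using pr mn unfolding RHSX by simp
          qed
        qed
      qed
    qed
    have "(MAX \<gamma>\<in>\<Gamma>. policy_revenue \<gamma> c W js) \<le> mech_run js (mech gs c W eta) [] + RHS"
    proof (subst Max_le_iff)
      show "finite ((\<lambda>\<gamma>. policy_revenue \<gamma> c W js) ` \<Gamma>)" using fin by simp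
      show "(\<lambda>\<gamma>. policy_revenue \<gamma> c W js) ` \<Gamma> \<noteq> {}" using ne by simp
      show "\<forall>a\<in>(\<lambda>\<gamma>. policy_revenue \<gamma> c W js) ` \<Gamma>. a \<le> mech_run js (mech gs c W eta) [] + RHS"
      proof
        fix a assume "a \<in> (\<lambda>\<gamma>. policy_revenue \<gamma> c W js) ` \<Gamma>"
        then obtain \<gamma> where "\<gamma> \<in> \<Gamma>" "a = policy_revenue \<gamma> c W js" by auto
        then obtain i where i: "i < length gs" "\<gamma> = gs ! i" using gs by (metis in_set_conv_nth)
        have "policy_revenue (gs ! i) c W js - mech_run js (mech gs c W eta) [] \<le> RHS" by (rule per[OF i(1)])
        then show "a \<le> mech_run js (mech gs c W eta) [] + RHS" using \<open>a = _\<close> i(2) by simp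
      qed
    qed
    then show "regret \<Gamma> c W (mech gs c W eta) js \<le> RHS"
      unfolding regret_def mech_revenue_def by simp
  qed
qed (simp)

end
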